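(* Let $\varepsilon\in(0,1)$, let $z>1$ and let $m\ge 1$ be an integer. There is a deterministic streaming algorithm that receives numbers $x_1,x_2,\dots\in[0,1]$ one at a time, uses $\mathcal{O}(\log_{1/(1-\varepsilon)} z)$ space and $\mathcal{O}(1)$ time per arrival, and after the arrival of $x_q$ (for $q\ge m$) outputs either a number $v$ or "No", such that, writing $W_q=x_{q-m+1}x_{q-m+2}\cdots x_q$: if it outputs a number $v$ then $(1-\varepsilon)W_q\le v\le W_q$; and if it outputs "No" then $W_q\le (1-\varepsilon)/z$.
   Context: Space is measured in stored numbers/machine words; each input number is assumed exactly representable and multiplication/division of such numbers is exact and takes $\mathcal{O}(1)$ time. *)

theory Defs
  imports Complex_Main
begin

text \<open>A small deterministic real-RAM model of streaming algorithms.
  Memory is a list of real-valued words (the space used is its length).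
  A program is executed once per arrival; the time for an arrival is the
  number of executed instructions.  Out-of-range reads give 0, out-of-range
  writes are ignored; addresses for indirect access are floors of stored words.\<close>

datatype instr =
    Const nat real
  | Copy nat nat
  | Add nat nat nat
  | Sub nat nat nat
  | Mul nat nat nat
  | Div nat nat nat
  | Input nat
  | Load nat nat
  | Store nat nat
  | JmpLe nat nat nat
  | Jmp nat
  | HaltNum nat
  | HaltNo

datatype out = OutNum real | OutNo

definition rd :: "real list \<Rightarrow> nat \<Rightarrow> real" where
  "rd M i = (if i < length M then M ! i else 0)"

definition addr :: "real \<Rightarrow> nat" where
  "addr r = nat \<lfloor>r\<rfloor>"

fun exec :: "instr list \<Rightarrow> real \<Rightarrow> nat \<Rightarrow> nat \<Rightarrow> real list \<Rightarrow> (real list \<times> out) option" where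
  "exec P x 0 pc M = None"
| "exec P x (Suc n) pc M =
     (if pc < length P then
        (case P ! pc of
           Const i c \<Rightarrow> exec P x n (Suc pc) (M[i := c])
         | Copy i j \<Rightarrow> exec P x n (Suc pc) (M[i := rd M j])
         | Add i j k \<Rightarrow> exec P x n (Suc pc) (M[i := rd M j + rd M k])
         | Sub i j k \<Rightarrow> exec P x n (Suc pc) (M[i := rd M j - rd M k])
         | Mul i j k \<Rightarrow> exec P x n (Suc pc) (M[i := rd M j * rd M k])
         | Div i j k \<Rightarrow> exec P x n (Suc pc) (M[i := rd M j / rd M k])
         | Input i \<Rightarrow> exec P x n (Suc pc) (M[i := x])
         | Load i j \<Rightarrow> exec P x n (Suc pc) (M[i := rd M (addr (rd M j))])
         | Store i j \<Rightarrow> exec P x n (Suc pc) (M[addr (rd M i) := rd M j])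
         | JmpLe i j t \<Rightarrow> exec P x n (if rd M i \<le> rd M j then t else Suc pc) M
         | Jmp t \<Rightarrow> exec P x n t M
         | HaltNum i \<Rightarrow> Some (M, OutNum (rd M i))
         | HaltNo \<Rightarrow> Some (M, OutNo))
      else None)"

text \<open>State (memory, last output) after processing arrivals xs 1, ..., xs k,
  with time budget T per arrival, starting from initial memory M0.\<close>
fun run :: "instr list \<Rightarrow> nat \<Rightarrow> real list \<Rightarrow> (nat \<Rightarrow> real) \<Rightarrow> nat \<Rightarrow> (real list \<times> out) option" where
  "run P T M0 xs 0 = Some (M0, OutNo)"
| "run P T M0 xs (Suc k) =
     (case run P T M0 xs k of
        None \<Rightarrow> None
      | Some (M, _) \<Rightarrow> exec P (xs (Suc k)) T 0 M)"

end

theory Submission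
  imports Defs
begin


definition prog :: "instr list" where
"prog = [Add 0 0 5, Input 13, JmpLe 13 6 44, Mul 1 1 13, Add 14 2 11, Load 15 14, Mul 15 15 7,
 JmpLe 1 15 9, Jmp 24, Add 2 2 5, JmpLe 9 2 12, Jmp 13, Copy 2 10, Store 2 0, Add 14 2 11,
 Store 14 1, JmpLe 12 4 19, Add 4 4 5, Jmp 24, Add 3 3 5, JmpLe 9 3 22, Jmp 24, Copy 3 10,
 Jmp 24, JmpLe 5 4 26, Jmp 36, Add 14 3 5, JmpLe 9 14 29, Jmp 30, Copy 14 10, Load 15 14,
 Add 15 15 8, JmpLe 15 0 34, Jmp 36, Copy 3 14, Sub 4 4 5, Load 15 3, Add 15 15 8,
 JmpLe 15 0 40, HaltNo, Add 14 3 11, Load 15 14, Div 16 1 15, HaltNum 16,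
 Copy 1 5, Add 2 2 5, JmpLe 9 2 48, Jmp 49, Copy 2 10, Store 2 0, Add 14 2 11, Store 14 1,
 Copy 3 2, Copy 4 6, HaltNo]"

lemma prog_len[simp]: "length prog = 55" by (simp add: prog_def)
lemma prog_nth[simp]:
  "prog ! 0 = Add 0 0 5"
  "prog ! 1 = Input 13"
  "prog ! 2 = JmpLe 13 6 44"
  "prog ! 3 = Mul 1 1 13"
  "prog ! 4 = Add 14 2 11"
  "prog ! 5 = Load 15 14"
  "prog ! 6 = Mul 15 15 7"
  "prog ! 7 = JmpLe 1 15 9"
  "prog ! 8 = Jmp 24"
  "prog ! 9 = Add 2 2 5"
  "prog ! 10 = JmpLe 9 2 12"
  "prog ! 11 = Jmp 13"
  "prog ! 12 = Copy 2 10"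
  "prog ! 13 = Store 2 0"
  "prog ! 14 = Add 14 2 11"
  "prog ! 15 = Store 14 1"
  "prog ! 16 = JmpLe 12 4 19"
  "prog ! 17 = Add 4 4 5"
  "prog ! 18 = Jmp 24"
  "prog ! 19 = Add 3 3 5"
  "prog ! 20 = JmpLe 9 3 22"
  "prog ! 21 = Jmp 24"
  "prog ! 22 = Copy 3 10"
  "prog ! 23 = Jmp 24"
  "prog ! 24 = JmpLe 5 4 26"
  "prog ! 25 = Jmp 36"
  "prog ! 26 = Add 14 3 5"
  "prog ! 27 = JmpLe 9 14 29"
  "prog ! 28 = Jmp 30"
  "prog ! 29 = Copy 14 10"
  "prog ! 30 = Load 15 14"
  "prog ! 31 = Add 15 15 8"
  "prog ! 32 = JmpLe 15 0 34"
  "prog ! 33 = Jmp 36"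
  "prog ! 34 = Copy 3 14"
  "prog ! 35 = Sub 4 4 5"
  "prog ! 36 = Load 15 3"
  "prog ! 37 = Add 15 15 8"
  "prog ! 38 = JmpLe 15 0 40"
  "prog ! 39 = HaltNo"
  "prog ! 40 = Add 14 3 11"
  "prog ! 41 = Load 15 14"
  "prog ! 42 = Div 16 1 15"
  "prog ! 43 = HaltNum 16"
  "prog ! 44 = Copy 1 5"
  "prog ! 45 = Add 2 2 5"
  "prog ! 46 = JmpLe 9 2 48"
  "prog ! 47 = Jmp 49"
  "prog ! 48 = Copy 2 10"
  "prog ! 49 = Store 2 0"
  "prog ! 50 = Add 14 2 11"
  "prog ! 51 = Store 14 1"
  "prog ! 52 = Copy 3 2"
  "prog ! 53 = Copy 4 6"
  "prog ! 54 = HaltNo"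
  by (simp_all add: prog_def)

lemma suc2[simp]: "Suc (Suc 0) = 2" by simp
lemma prog_nth2[simp]: "prog ! Suc 0 = Input 13" "prog ! Suc (Suc 0) = JmpLe 13 6 44" by (simp_all add: prog_def)

lemma rd_upd[simp]: "rd (M[i := v]) j = (if i = j \<and> i < length M then v else rd M j)"
  by (auto simp: rd_def)

lemma addr_nat[simp]: "addr (real n) = n" by (simp add: addr_def)
lemma addr_num[simp]: "addr (numeral k) = numeral k" unfolding addr_def by simp
lemma addr_add1[simp]: "0 \<le> b \<Longrightarrow> addr (b + 1) = addr b + 1"
  unfolding addr_def by (simp add: nat_add_distrib)
lemma addr_addn[simp]: "0 \<le> b \<Longrightarrow> addr (b + real n) = addr b + n"
  unfolding addr_def by (simp add: nat_add_distrib)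
lemma addr_numadd[simp]: "0 \<le> b \<Longrightarrow> addr (numeral k + b) = numeral k + addr b"
  unfolding addr_def by (simp add: nat_add_distrib)

type_synonym cst = "nat \<times> real \<times> nat \<times> nat \<times> nat \<times> (nat \<Rightarrow> real) \<times> (nat \<Rightarrow> real)"

definition memfacts :: "nat \<Rightarrow> real \<Rightarrow> nat \<Rightarrow> real list \<Rightarrow> cst \<Rightarrow> bool" where
"memfacts K e1 m M s = (case s of (q,R,sN,sp,cnt,bt,bR) \<Rightarrow>
  length M = 17 + 2*K \<and> rd M 0 = real q \<and> rd M 1 = R \<and> rd M 2 = 17 + real sN \<and>
  rd M 3 = 17 + real sp \<and> rd M 4 = real cnt \<and> rd M 5 = 1 \<and> rd M 6 = 0 \<and> rd M 7 = e1 \<and>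
  rd M 8 = real m \<and> rd M 9 = 17 + real K \<and> rd M 10 = 17 \<and> rd M 11 = real K \<and>
  rd M 12 = real K - 1 \<and> sN < K \<and> sp < K \<and>
  (\<forall>i<K. rd M (17+i) = bt i \<and> rd M (17+K+i) = bR i))"

lemmas exec_num = exec.simps(2)[of _ _ "pred_numeral w" for w, folded numeral_eq_Suc]

definition wrap :: "nat \<Rightarrow> nat \<Rightarrow> nat" where "wrap K s = (if s + 1 = K then 0 else s + 1)"

lemma ex_pc:
  "exec prog x n 0 M = (if n = 0 then None else exec prog x (n - 1) (Suc 0) (M[0 := rd M 0 + rd M 5]))"
  "exec prog x n (Suc 0) M = (if n = 0 then None else exec prog x (n - 1) 2 (M[13 := x]))"
  "exec prog x n 2 M = (if n = 0 then None else (if rd M 13 \<le> rd M 6 then exec prog x (n - 1) 44 M else exec prog x (n - 1) 3 M))"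
  "exec prog x n 3 M = (if n = 0 then None else exec prog x (n - 1) 4 (M[1 := rd M 1 * rd M 13]))"
  "exec prog x n 4 M = (if n = 0 then None else exec prog x (n - 1) 5 (M[14 := rd M 2 + rd M 11]))"
  "exec prog x n 5 M = (if n = 0 then None else exec prog x (n - 1) 6 (M[15 := rd M (addr (rd M 14))]))"
  "exec prog x n 6 M = (if n = 0 then None else exec prog x (n - 1) 7 (M[15 := rd M 15 * rd M 7]))"
  "exec prog x n 7 M = (if n = 0 then None else (if rd M 1 \<le> rd M 15 then exec prog x (n - 1) 9 M else exec prog x (n - 1) 8 M))"
  "exec prog x n 8 M = (if n = 0 then None else exec prog x (n - 1) 24 M)"
  "exec prog x n 9 M = (if n = 0 then None else exec prog x (n - 1) 10 (M[2 := rd M 2 + rd M 5]))"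
  "exec prog x n 10 M = (if n = 0 then None else (if rd M 9 \<le> rd M 2 then exec prog x (n - 1) 12 M else exec prog x (n - 1) 11 M))"
  "exec prog x n 11 M = (if n = 0 then None else exec prog x (n - 1) 13 M)"
  "exec prog x n 12 M = (if n = 0 then None else exec prog x (n - 1) 13 (M[2 := rd M 10]))"
  "exec prog x n 13 M = (if n = 0 then None else exec prog x (n - 1) 14 (M[addr (rd M 2) := rd M 0]))"
  "exec prog x n 14 M = (if n = 0 then None else exec prog x (n - 1) 15 (M[14 := rd M 2 + rd M 11]))"
  "exec prog x n 15 M = (if n = 0 then None else exec prog x (n - 1) 16 (M[addr (rd M 14) := rd M 1]))"
  "exec prog x n 16 M = (if n = 0 then None else (if rd M 12 \<le> rd M 4 then exec prog x (n - 1) 19 M else exec prog x (n - 1) 17 M))"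
  "exec prog x n 17 M = (if n = 0 then None else exec prog x (n - 1) 18 (M[4 := rd M 4 + rd M 5]))"
  "exec prog x n 18 M = (if n = 0 then None else exec prog x (n - 1) 24 M)"
  "exec prog x n 19 M = (if n = 0 then None else exec prog x (n - 1) 20 (M[3 := rd M 3 + rd M 5]))"
  "exec prog x n 20 M = (if n = 0 then None else (if rd M 9 \<le> rd M 3 then exec prog x (n - 1) 22 M else exec prog x (n - 1) 21 M))"
  "exec prog x n 21 M = (if n = 0 then None else exec prog x (n - 1) 24 M)"
  "exec prog x n 22 M = (if n = 0 then None else exec prog x (n - 1) 23 (M[3 := rd M 10]))"
  "exec prog x n 23 M = (if n = 0 then None else exec prog x (n - 1) 24 M)"
  "exec prog x n 24 M = (if n = 0 then None else (if rd M 5 \<le> rd M 4 then exec prog x (n - 1) 26 M else exec prog x (n - 1) 25 M))"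
  "exec prog x n 25 M = (if n = 0 then None else exec prog x (n - 1) 36 M)"
  "exec prog x n 26 M = (if n = 0 then None else exec prog x (n - 1) 27 (M[14 := rd M 3 + rd M 5]))"
  "exec prog x n 27 M = (if n = 0 then None else (if rd M 9 \<le> rd M 14 then exec prog x (n - 1) 29 M else exec prog x (n - 1) 28 M))"
  "exec prog x n 28 M = (if n = 0 then None else exec prog x (n - 1) 30 M)"
  "exec prog x n 29 M = (if n = 0 then None else exec prog x (n - 1) 30 (M[14 := rd M 10]))"
  "exec prog x n 30 M = (if n = 0 then None else exec prog x (n - 1) 31 (M[15 := rd M (addr (rd M 14))]))"
  "exec prog x n 31 M = (if n = 0 then None else exec prog x (n - 1) 32 (M[15 := rd M 15 + rd M 8]))"
  "exec prog x n 32 M = (if n = 0 then None else (if rd M 15 \<le> rd M 0 then exec prog x (n - 1) 34 M else exec prog x (n - 1) 33 M))"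
  "exec prog x n 33 M = (if n = 0 then None else exec prog x (n - 1) 36 M)"
  "exec prog x n 34 M = (if n = 0 then None else exec prog x (n - 1) 35 (M[3 := rd M 14]))"
  "exec prog x n 35 M = (if n = 0 then None else exec prog x (n - 1) 36 (M[4 := rd M 4 - rd M 5]))"
  "exec prog x n 36 M = (if n = 0 then None else exec prog x (n - 1) 37 (M[15 := rd M (addr (rd M 3))]))"
  "exec prog x n 37 M = (if n = 0 then None else exec prog x (n - 1) 38 (M[15 := rd M 15 + rd M 8]))"
  "exec prog x n 38 M = (if n = 0 then None else (if rd M 15 \<le> rd M 0 then exec prog x (n - 1) 40 M else exec prog x (n - 1) 39 M))"
  "exec prog x n 39 M = (if n = 0 then None else Some (M, OutNo))"
  "exec prog x n 40 M = (if n = 0 then None else exec prog x (n - 1) 41 (M[14 := rd M 3 + rd M 11]))"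
  "exec prog x n 41 M = (if n = 0 then None else exec prog x (n - 1) 42 (M[15 := rd M (addr (rd M 14))]))"
  "exec prog x n 42 M = (if n = 0 then None else exec prog x (n - 1) 43 (M[16 := rd M 1 / rd M 15]))"
  "exec prog x n 43 M = (if n = 0 then None else Some (M, OutNum (rd M 16)))"
  "exec prog x n 44 M = (if n = 0 then None else exec prog x (n - 1) 45 (M[1 := rd M 5]))"
  "exec prog x n 45 M = (if n = 0 then None else exec prog x (n - 1) 46 (M[2 := rd M 2 + rd M 5]))"
  "exec prog x n 46 M = (if n = 0 then None else (if rd M 9 \<le> rd M 2 then exec prog x (n - 1) 48 M else exec prog x (n - 1) 47 M))"
  "exec prog x n 47 M = (if n = 0 then None else exec prog x (n - 1) 49 M)"
  "exec prog x n 48 M = (if n = 0 then None else exec prog x (n - 1) 49 (M[2 := rd M 10]))"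
  "exec prog x n 49 M = (if n = 0 then None else exec prog x (n - 1) 50 (M[addr (rd M 2) := rd M 0]))"
  "exec prog x n 50 M = (if n = 0 then None else exec prog x (n - 1) 51 (M[14 := rd M 2 + rd M 11]))"
  "exec prog x n 51 M = (if n = 0 then None else exec prog x (n - 1) 52 (M[addr (rd M 14) := rd M 1]))"
  "exec prog x n 52 M = (if n = 0 then None else exec prog x (n - 1) 53 (M[3 := rd M 2]))"
  "exec prog x n 53 M = (if n = 0 then None else exec prog x (n - 1) 54 (M[4 := rd M 6]))"
  "exec prog x n 54 M = (if n = 0 then None else Some (M, OutNo))"
  by (cases n; simp add: prog_def)+


definition outf :: "nat \<Rightarrow> cst \<Rightarrow> out" where
"outf m s = (case s of (q,R,sN,sp,cnt,bt,bR) \<Rightarrow>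
   if bt sp + real m \<le> real q then OutNum (R / bR sp) else OutNo)"

lemma mf_scratch[simp]:
  assumes j: "j \<in> {13,14,15,16}"
  shows "memfacts K e1 m (M[j:=v]) s = memfacts K e1 m M s"
proof -
  have eq: "\<And>i. i \<notin> {13,14,15,16} \<Longrightarrow> rd (M[j:=v]) i = rd M i" using j by auto
  show ?thesis unfolding memfacts_def
    by (cases s) (simp add: eq del: rd_upd)
qed

lemma mf_facts:
  assumes "memfacts K e1 m M (q,R,sN,sp,cnt,bt,bR)"
  shows "length M = 17 + 2*K \<and> rd M 0 = real q \<and> rd M (Suc 0) = R \<and> rd M 2 = 17 + real sN \<and>
  rd M 3 = 17 + real sp \<and> rd M 4 = real cnt \<and> rd M 5 = 1 \<and> rd M 6 = 0 \<and> rd M 7 = e1 \<and>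
  rd M 8 = real m \<and> rd M 9 = 17 + real K \<and> rd M 10 = 17 \<and> rd M 11 = real K \<and>
  rd M 12 = real K - 1 \<and> sN < K \<and> sp < K \<and> rd M (17 + sN) = bt sN \<and> rd M (17 + sp) = bt sp
  \<and> rd M (17 + sN + K) = bR sN \<and> rd M (17 + sp + K) = bR sp \<and> rd M 17 = bt 0 \<and> rd M (17 + K) = bR 0
  \<and> (sp + 1 < K \<longrightarrow> rd M (18 + sp) = bt (Suc sp))"
proof -
  have b: "\<And>i. i<K \<Longrightarrow> rd M (17+i) = bt i \<and> rd M (17+K+i) = bR i" "sN < K" "sp < K"
    using assms by (auto simp: memfacts_def)
  have "rd M (17 + sN + K) = bR sN" "rd M (17 + sp + K) = bR sp" "rd M 17 = bt 0" "rd M (17 + K) = bR 0"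
    using b(1)[of sN] b(1)[of sp] b(1)[of 0] b(2,3) by (auto simp: ac_simps)
  moreover have "sp + 1 < K \<longrightarrow> rd M (18 + sp) = bt (Suc sp)" using b(1)[of "Suc sp"] by auto
  ultimately show ?thesis using assms b by (auto simp: memfacts_def)
qed

lemma exec_mono: "exec P x n pc M = Some r \<Longrightarrow> n \<le> n' \<Longrightarrow> exec P x n' pc M = Some r"
proof (induction n arbitrary: n' pc M)
  case 0
  then show ?case by simp
next
  case (Suc n)
  then obtain n2 where n2: "n' = Suc n2" "n \<le> n2" by (cases n') auto
  show ?case using Suc.prems(1) unfolding n2
    by (auto simp: Let_def split: if_splits instr.splits intro: Suc.IH[OF _ n2(2)])
qed

lemma blk_out:
  assumes mf: "memfacts K e1 m M s"
  shows "\<exists>M'. exec prog x 8 36 M = Some (M', outf m s) \<and> memfacts K e1 m M' s"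
proof -
  obtain q R sN sp cnt bt bR where s: "s = (q,R,sN,sp,cnt,bt,bR)" by (cases s) auto
  note f = mf_facts[OF mf[unfolded s]]
  show ?thesis
  proof (cases "bt sp + real m \<le> real q")
    case True
    then show ?thesis using f mf unfolding s by (simp add: ex_pc outf_def)
  next
    case False
    then show ?thesis using f mf unfolding s by (simp add: ex_pc outf_def)
  qed
qed
lemma blk_out':
  assumes "memfacts K e1 m M s" "8 \<le> k"
  shows "\<exists>M'. exec prog x k 36 M = Some (M', outf m s) \<and> memfacts K e1 m M' s"
  using blk_out[OF assms(1), of x] exec_mono assms(2) by blast

definition adv_st :: "nat \<Rightarrow> nat \<Rightarrow> cst \<Rightarrow> cst" where
"adv_st K m s = (case s of (q,R,sN,sp,cnt,bt,bR) \<Rightarrow>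
   if 1 \<le> cnt \<and> bt (wrap K sp) + real m \<le> real q then (q,R,sN,wrap K sp,cnt - 1,bt,bR) else s)"

lemma blk_adv:
  assumes mf: "memfacts K e1 m M s"
  shows "\<exists>M'. exec prog x 20 24 M = Some (M', outf m (adv_st K m s)) \<and> memfacts K e1 m M' (adv_st K m s)"
proof -
  obtain q R sN sp cnt bt bR where s: "s = (q,R,sN,sp,cnt,bt,bR)" by (cases s) auto
  note f = mf_facts[OF mf[unfolded s]]
  consider (a) "cnt = 0" | (b) "1 \<le> cnt" "sp + 1 = K" | (c) "1 \<le> cnt" "sp + 1 < K" using f by linarith
  then show ?thesis
  proof cases
    case a
    then show ?thesis using f mf unfolding s
      apply (simp add: ex_pc(1-36) adv_st_def)
      apply (rule blk_out')
      apply (simp_all add: memfacts_def)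
      done
  next
    case b
    have w: "wrap K sp = 0" using b by (simp add: wrap_def)
    show ?thesis
    proof (cases "bt 0 + real m \<le> real q")
      case True
      then show ?thesis using f mf b unfolding s
      apply (simp add: ex_pc(1-36) adv_st_def w)
      apply (rule blk_out')
      apply (simp_all add: memfacts_def)
      done
    next
      case False
      then show ?thesis using f mf b unfolding s
      apply (simp add: ex_pc(1-36) adv_st_def w)
      apply (rule blk_out')
      apply (simp_all add: memfacts_def)
      done
    qed
  next
    case c
    have w: "wrap K sp = Suc sp" using c by (simp add: wrap_def)
    show ?thesis
    proof (cases "bt (Suc sp) + real m \<le> real q")
      case True
      then show ?thesis using f mf c unfolding s
      apply (simp add: ex_pc(1-36) adv_st_def w)
      apply (rule blk_out')
      apply (simp_all add: memfacts_def)
      done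
    next
      case False
      then show ?thesis using f mf c unfolding s
      apply (simp add: ex_pc(1-36) adv_st_def w)
      apply (rule blk_out')
      apply (simp_all add: memfacts_def)
      done
    qed
  qed
qed
lemma blk_adv':
  assumes "memfacts K e1 m M s" "20 \<le> k"
  shows "\<exists>M'. exec prog x k 24 M = Some (M', outf m (adv_st K m s)) \<and> memfacts K e1 m M' (adv_st K m s)"
  using blk_adv[OF assms(1), of x] exec_mono assms(2) by blast

definition ev_st :: "nat \<Rightarrow> cst \<Rightarrow> cst" where
"ev_st K s = (case s of (q,R,sN,sp,cnt,bt,bR) \<Rightarrow>
   if K \<le> cnt + 1 then (q,R,wrap K sN,wrap K sp,cnt,bt(wrap K sN:=real q),bR(wrap K sN:=R))
   else (q,R,wrap K sN,sp,cnt+1,bt(wrap K sN:=real q),bR(wrap K sN:=R)))"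

lemma blk_ev:
  assumes mf: "memfacts K e1 m M s"
  shows "\<exists>M'. exec prog x 40 9 M = Some (M', outf m (adv_st K m (ev_st K s))) \<and> memfacts K e1 m M' (adv_st K m (ev_st K s))"
proof -
  obtain q R sN sp cnt bt bR where s: "s = (q,R,sN,sp,cnt,bt,bR)" by (cases s) auto
  note f = mf_facts[OF mf[unfolded s]]
  consider (a) "sN + 1 = K" | (b) "sN + 1 < K" using f by linarith
  then show ?thesis
  proof cases
    case a
    have w: "wrap K sN = 0" using a by (simp add: wrap_def)
    consider (a1) "cnt + 1 < K" | (a2) "K \<le> cnt + 1" "sp + 1 = K" | (a3) "K \<le> cnt + 1" "sp + 1 < K" using f by linarith
    then show ?thesis
    proof cases
      case a1
      then show ?thesis using f mf a unfolding s
      apply (simp add: ex_pc(1-24) ev_st_def w)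
      apply (rule blk_adv')
      apply (auto simp add: memfacts_def)
      done
    next
      case a2
      have w2: "wrap K sp = 0" using a2 by (simp add: wrap_def)
      show ?thesis using f mf a a2 unfolding s
      apply (simp add: ex_pc(1-24) ev_st_def w w2)
      apply (rule blk_adv')
      apply (auto simp add: memfacts_def)
      done
    next
      case a3
      have w2: "wrap K sp = Suc sp" using a3 by (simp add: wrap_def)
      show ?thesis using f mf a a3 unfolding s
      apply (simp add: ex_pc(1-24) ev_st_def w w2)
      apply (rule blk_adv')
      apply (auto simp add: memfacts_def)
      done
    qed
  next
    case b
    have w: "wrap K sN = Suc sN" using b by (simp add: wrap_def)
    consider (a1) "cnt + 1 < K" | (a2) "K \<le> cnt + 1" "sp + 1 = K" | (a3) "K \<le> cnt + 1" "sp + 1 < K" using f by linarith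
    then show ?thesis
    proof cases
      case a1
      then show ?thesis using f mf b unfolding s
      apply (simp add: ex_pc(1-24) ev_st_def w)
      apply (rule blk_adv')
      apply (auto simp add: memfacts_def)
      done
    next
      case a2
      have w2: "wrap K sp = 0" using a2 by (simp add: wrap_def)
      show ?thesis using f mf b a2 unfolding s
      apply (simp add: ex_pc(1-24) ev_st_def w w2)
      apply (rule blk_adv')
      apply (auto simp add: memfacts_def)
      done
    next
      case a3
      have w2: "wrap K sp = Suc sp" using a3 by (simp add: wrap_def)
      show ?thesis using f mf b a3 unfolding s
      apply (simp add: ex_pc(1-24) ev_st_def w w2)
      apply (rule blk_adv')
      apply (auto simp add: memfacts_def)
      done
    qed
  qed
qed
lemma blk_ev':
  assumes "memfacts K e1 m M s" "40 \<le> k"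
  shows "\<exists>M'. exec prog x k 9 M = Some (M', outf m (adv_st K m (ev_st K s))) \<and> memfacts K e1 m M' (adv_st K m (ev_st K s))"
  using blk_ev[OF assms(1), of x] exec_mono assms(2) by blast

definition rst_st :: "nat \<Rightarrow> cst \<Rightarrow> cst" where
"rst_st K s = (case s of (q,R,sN,sp,cnt,bt,bR) \<Rightarrow>
   (q,1,wrap K sN,wrap K sN,0,bt(wrap K sN:=real q),bR(wrap K sN:=1)))"

definition cstep :: "nat \<Rightarrow> real \<Rightarrow> nat \<Rightarrow> cst \<Rightarrow> real \<Rightarrow> cst" where
"cstep K e1 m s x = (case s of (q,R,sN,sp,cnt,bt,bR) \<Rightarrow>
   if x \<le> 0 then rst_st K (q+1,R,sN,sp,cnt,bt,bR)
   else adv_st K m (if R*x \<le> bR sN * e1 then ev_st K (q+1,R*x,sN,sp,cnt,bt,bR) else (q+1,R*x,sN,sp,cnt,bt,bR)))"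

lemma blk_main:
  assumes mf: "memfacts K e1 m M s" and m: "1 \<le> m"
  shows "\<exists>M'. exec prog x 60 0 M = Some (M', outf m (cstep K e1 m s x)) \<and> memfacts K e1 m M' (cstep K e1 m s x)"
proof -
  obtain q R sN sp cnt bt bR where s: "s = (q,R,sN,sp,cnt,bt,bR)" by (cases s) auto
  note f = mf_facts[OF mf[unfolded s]]
  show ?thesis
  proof (cases "x \<le> 0")
    case True
    consider (a) "sN + 1 = K" | (b) "sN + 1 < K" using f by linarith
    then show ?thesis
    proof cases
      case a
      have w: "wrap K sN = 0" using a by (simp add: wrap_def)
      show ?thesis using f mf a m True unfolding s
        by (auto simp add: ex_pc cstep_def rst_st_def outf_def memfacts_def w)
    next
      case b
      have w: "wrap K sN = Suc sN" using b by (simp add: wrap_def)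
      show ?thesis using f mf b m True unfolding s
        by (auto simp add: ex_pc cstep_def rst_st_def outf_def memfacts_def w)
    qed
  next
    case False
    show ?thesis
    proof (cases "R*x \<le> bR sN * e1")
      case True
      show ?thesis using f mf True False unfolding s
        apply (simp add: ex_pc(1-9) cstep_def)
        apply (rule blk_ev')
        apply (auto simp add: memfacts_def)
        done
    next
      case nev: False
      show ?thesis using f mf nev False unfolding s
        apply (simp add: ex_pc(1-9) cstep_def)
        apply (rule blk_adv')
        apply (auto simp add: memfacts_def)
        done
    qed
  qed
qed
type_synonym ast = "nat \<times> real \<times> nat \<times> nat \<times> nat \<times> (nat \<Rightarrow> nat) \<times> (nat \<Rightarrow> real)"

definition astep :: "nat \<Rightarrow> real \<Rightarrow> nat \<Rightarrow> ast \<Rightarrow> real \<Rightarrow> ast" where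
"astep K e1 m a x = (case a of (q,R,N,p,r,tt,RR) \<Rightarrow>
  if x \<le> 0 then (Suc q, 1, Suc N, Suc N, Suc N, tt(Suc N := Suc q), RR(Suc N := 1))
  else if R*x \<le> RR N * e1 then
    (let p1 = (if K \<le> N - p + 1 then Suc p else p); tt' = tt(Suc N := Suc q) in
     (Suc q, R*x, Suc N, (if p1 < Suc N \<and> tt' (Suc p1) + m \<le> Suc q then Suc p1 else p1), r, tt', RR(Suc N := R*x)))
  else (Suc q, R*x, N, (if p < N \<and> tt (Suc p) + m \<le> Suc q then Suc p else p), r, tt, RR))"

definition aout :: "nat \<Rightarrow> ast \<Rightarrow> out" where
"aout m a = (case a of (q,R,N,p,r,tt,RR) \<Rightarrow> if tt p + m \<le> q then OutNum (R / RR p) else OutNo)"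

definition rep :: "nat \<Rightarrow> ast \<Rightarrow> cst \<Rightarrow> bool" where
"rep K a c = (case a of (q,R,N,p,r,tt,RR) \<Rightarrow> case c of (q',R',sN,sp,cnt,bt,bR) \<Rightarrow>
   q' = q \<and> R' = R \<and> sN = N mod K \<and> sp = p mod K \<and> cnt = N - p \<and>
   (\<forall>j. j \<le> N \<longrightarrow> N < j + K \<longrightarrow> bt (j mod K) = real (tt j) \<and> bR (j mod K) = RR j))"

lemma real_le_iff: "(real a + real b \<le> real c) = (a + b \<le> c)"
  by (metis of_nat_add of_nat_le_iff)

lemma mod_neq: "(j::nat) < n \<Longrightarrow> n < j + K \<Longrightarrow> j mod K \<noteq> n mod K"
proof
  assume a: "j < n" "n < j + K" "j mod K = n mod K"
  then have "K dvd n - j" using mod_eq_dvd_iff_nat[of j n K] by simp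
  moreover have "0 < n - j" "n - j < K" using a by auto
  ultimately show False using dvd_imp_le by fastforce
qed

lemma wrap_mod: "0 < K \<Longrightarrow> wrap K (n mod K) = Suc n mod K"
  by (simp add: wrap_def mod_Suc)

lemma rep_step:
  assumes rp: "rep K a c" and a: "a = (q,R,N,p,r,tt,RR)" and pN: "p \<le> N" "N - p < K" and K: "2 \<le> K"
  shows "rep K (astep K e1 m a x) (cstep K e1 m c x)"
proof -
  obtain q' R' sN sp cnt bt bR where c: "c = (q',R',sN,sp,cnt,bt,bR)" by (cases c) auto
  have r: "q' = q" "R' = R" "sN = N mod K" "sp = p mod K" "cnt = N - p"
    and w: "\<And>j. j \<le> N \<Longrightarrow> N < j + K \<Longrightarrow> bt (j mod K) = real (tt j) \<and> bR (j mod K) = RR j"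
    using rp unfolding rep_def a c by auto
  have K0: "0 < K" using K by simp
  have bN: "bR sN = RR N" using w[of N] K r by auto
  have wN: "wrap K sN = Suc N mod K" using wrap_mod[OF K0] r by simp
  have wp: "wrap K sp = Suc p mod K" using wrap_mod[OF K0] r by simp
  show ?thesis
  proof (cases "x \<le> 0")
    case True
    have "rep K (Suc q, 1, Suc N, Suc N, Suc N, tt(Suc N := Suc q), RR(Suc N := 1))
       (Suc q, 1, wrap K sN, wrap K sN, 0, bt(wrap K sN := real (Suc q)), bR(wrap K sN := 1))"
      unfolding rep_def using w wN mod_neq[of _ "Suc N" K] by (auto simp: le_Suc_eq)
    then show ?thesis using True unfolding a c astep_def cstep_def rst_st_def r by simp
  next
    case xp: False
    show ?thesis
    proof (cases "R*x \<le> RR N * e1")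
      case ev: True
      define tt' where "tt' = tt(Suc N := Suc q)"
      define RR' where "RR' = RR(Suc N := R*x)"
      define bt' where "bt' = bt(Suc N mod K := real (Suc q))"
      define bR' where "bR' = bR(Suc N mod K := R*x)"
      have w': "\<And>j. j \<le> Suc N \<Longrightarrow> Suc N < j + K \<Longrightarrow> bt' (j mod K) = real (tt' j) \<and> bR' (j mod K) = RR' j"
        unfolding bt'_def bR'_def tt'_def RR'_def using w mod_neq[of _ "Suc N" K] by (auto simp: le_Suc_eq)
      define p1 where "p1 = (if K \<le> N - p + 1 then Suc p else p)"
      define sp1 where "sp1 = (if K \<le> cnt + 1 then wrap K sp else sp)"
      define cnt1 where "cnt1 = (if K \<le> cnt + 1 then cnt else cnt + 1)"
      have s1: "sp1 = p1 mod K" "cnt1 = Suc N - p1" "p1 \<le> Suc N" "Suc N - p1 < K"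
        unfolding sp1_def p1_def cnt1_def using r wp pN by auto
      have cond: "(1 \<le> cnt1 \<and> bt' (wrap K sp1) + real m \<le> real (Suc q)) \<longleftrightarrow>
                  (p1 < Suc N \<and> tt' (Suc p1) + m \<le> Suc q)"
      proof (cases "p1 < Suc N")
        case True
        have "bt' (wrap K sp1) = real (tt' (Suc p1))" using w'[of "Suc p1"] s1 True wrap_mod[OF K0] by auto
        then show ?thesis using True s1 real_le_iff[of "tt' (Suc p1)" m "Suc q"] by auto
      next
        case False
        then show ?thesis using s1 by simp
      qed
      have lhs: "astep K e1 m a x = (Suc q, R*x, Suc N, (if p1 < Suc N \<and> tt' (Suc p1) + m \<le> Suc q then Suc p1 else p1), r, tt', RR')"
        unfolding a astep_def p1_def tt'_def RR'_def using xp ev by (simp add: Let_def)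
      have bN': "bR (N mod K) = RR N" using bN r by simp
      have evq: "ev_st K (Suc q, R*x, sN, sp, cnt, bt, bR) = (Suc q, R*x, Suc N mod K, sp1, cnt1, bt', bR')"
        unfolding ev_st_def sp1_def cnt1_def bt'_def bR'_def using wN by simp
      have cst: "cstep K e1 m c x = adv_st K m (Suc q, R*x, Suc N mod K, sp1, cnt1, bt', bR')"
        using xp ev bN' evq unfolding c cstep_def r by simp
      have rhs: "cstep K e1 m c x = (if 1 \<le> cnt1 \<and> bt' (wrap K sp1) + real m \<le> real (Suc q)
          then (Suc q, R*x, Suc N mod K, wrap K sp1, cnt1 - 1, bt', bR') else (Suc q, R*x, Suc N mod K, sp1, cnt1, bt', bR'))"
        unfolding cst adv_st_def by simp
      show ?thesis unfolding lhs rhs cond using s1 w' wN wrap_mod[OF K0]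
        by (auto simp: rep_def)
    next
      case nev: False
      have cond: "(1 \<le> cnt \<and> bt (wrap K sp) + real m \<le> real (Suc q)) \<longleftrightarrow>
                  (p < N \<and> tt (Suc p) + m \<le> Suc q)"
      proof (cases "p < N")
        case True
        have "bt (wrap K sp) = real (tt (Suc p))" using w[of "Suc p"] pN True wp by auto
        then show ?thesis using True r real_le_iff[of "tt (Suc p)" m "Suc q"] by auto
      next
        case False
        then show ?thesis using r by simp
      qed
      have lhs: "astep K e1 m a x = (Suc q, R*x, N, (if p < N \<and> tt (Suc p) + m \<le> Suc q then Suc p else p), r, tt, RR)"
        unfolding a astep_def using xp nev by simp
      have rhs: "cstep K e1 m c x = (if 1 \<le> cnt \<and> bt (wrap K sp) + real m \<le> real (Suc q)
          then (Suc q, R*x, sN, wrap K sp, cnt - 1, bt, bR) else (Suc q, R*x, sN, sp, cnt, bt, bR))"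
        unfolding c cstep_def adv_st_def using xp nev r bN by simp
      show ?thesis unfolding lhs rhs cond using r w wp pN
        by (auto simp: rep_def)
    qed
  qed
qed

lemma out_eq:
  assumes rp: "rep K a c" and a: "a = (q,R,N,p,r,tt,RR)" and pN: "p \<le> N" "N - p < K"
  shows "outf m c = aout m a"
proof -
  obtain q' R' sN sp cnt bt bR where c: "c = (q',R',sN,sp,cnt,bt,bR)" by (cases c) auto
  have r: "q' = q" "R' = R" "sp = p mod K"
    and w: "\<And>j. j \<le> N \<Longrightarrow> N < j + K \<Longrightarrow> bt (j mod K) = real (tt j) \<and> bR (j mod K) = RR j"
    using rp unfolding rep_def a c by auto
  have "bt sp = real (tt p)" "bR sp = RR p" using w[of p] pN r by auto
  then show ?thesis unfolding outf_def aout_def a c r using real_le_iff[of "tt p" m q] by auto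
qed
definition pr :: "(nat \<Rightarrow> real) \<Rightarrow> nat \<Rightarrow> nat \<Rightarrow> real" where
"pr xs a b = (\<Prod>i\<in>{a<..b}. xs i)"

lemma pr_self[simp]: "pr xs a a = 1" by (simp add: pr_def)

lemma pr_Suc: "a \<le> b \<Longrightarrow> pr xs a (Suc b) = pr xs a b * xs (Suc b)"
proof -
  assume "a \<le> b"
  then have "{a<..Suc b} = insert (Suc b) {a<..b}" by auto
  then show ?thesis unfolding pr_def by (simp add: mult.commute)
qed

lemma pr_split: "a \<le> b \<Longrightarrow> b \<le> c \<Longrightarrow> pr xs a c = pr xs a b * pr xs b c"
proof (induction c)
  case 0 then show ?case by simp
next
  case (Suc c)
  show ?case
  proof (cases "b = Suc c")
    case True then show ?thesis by simp
  next
    case False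
    then have "b \<le> c" using Suc by simp
    then show ?thesis using Suc pr_Suc[of a c xs] pr_Suc[of b c xs] by simp
  qed
qed

lemma pr_nonneg: "(\<forall>i\<ge>1. 0 \<le> xs i \<and> xs i \<le> 1) \<Longrightarrow> 0 \<le> pr xs a b"
  unfolding pr_def by (rule prod_nonneg) auto

lemma pr_le1: "(\<forall>i\<ge>1. 0 \<le> xs i \<and> xs i \<le> 1) \<Longrightarrow> pr xs a b \<le> 1"
  unfolding pr_def by (rule prod_le_1) auto

lemma pr_pos: "(\<forall>i. a < i \<and> i \<le> b \<longrightarrow> 0 < xs i) \<Longrightarrow> 0 < pr xs a b"
  unfolding pr_def by (rule prod_pos) auto

lemma pr_mono: "(\<forall>i\<ge>1. 0 \<le> xs i \<and> xs i \<le> 1) \<Longrightarrow> a \<le> b \<Longrightarrow> b \<le> c \<Longrightarrow> pr xs a c \<le> pr xs a b"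
proof -
  assume h: "\<forall>i\<ge>1. 0 \<le> xs i \<and> xs i \<le> 1" "a \<le> b" "b \<le> c"
  have "pr xs a c = pr xs a b * pr xs b c" using pr_split h by blast
  moreover have "0 \<le> pr xs a b" "pr xs b c \<le> 1" using pr_nonneg pr_le1 h by auto
  ultimately show ?thesis by (simp add: mult_left_le)
qed

lemma pr_zero: "a < i \<Longrightarrow> i \<le> b \<Longrightarrow> xs i = 0 \<Longrightarrow> pr xs a b = 0"
  unfolding pr_def by (rule prod_zero) auto

definition Inv :: "nat \<Rightarrow> real \<Rightarrow> nat \<Rightarrow> (nat \<Rightarrow> real) \<Rightarrow> ast \<Rightarrow> bool" where
"Inv K e1 m xs a = (case a of (q,R,N,p,r,tt,RR) \<Rightarrow>
  r \<le> p \<and> p \<le> N \<and> N - p < K \<and> tt r \<le> q \<and> (0 < tt r \<longrightarrow> xs (tt r) = 0) \<and>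
  (\<forall>i. tt r < i \<and> i \<le> q \<longrightarrow> 0 < xs i) \<and> R = pr xs (tt r) q \<and>
  (\<forall>j. r \<le> j \<and> j \<le> N \<longrightarrow> RR j = pr xs (tt r) (tt j) \<and> tt j \<le> q) \<and>
  (\<forall>j. r \<le> j \<and> j < N \<longrightarrow> tt j < tt (Suc j) \<and> RR (Suc j) \<le> RR j * e1) \<and>
  (\<forall>j t. r \<le> j \<and> j \<le> N \<and> tt j \<le> t \<and> t \<le> q \<and> (j < N \<longrightarrow> t < tt (Suc j)) \<longrightarrow> RR j * e1 < pr xs (tt r) t) \<and>
  max r (Suc N - K) \<le> p \<and> (p < N \<longrightarrow> q < tt (Suc p) + m) \<and> (q < tt p + m \<longrightarrow> p = max r (Suc N - K)))"

lemma ptr_step: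
  fixes tt :: "nat \<Rightarrow> nat"
  assumes strict: "\<forall>j. r \<le> j \<and> j < N' \<longrightarrow> tt j < tt (Suc j)"
  and h: "r \<le> lo" "lo \<le> p1" "p1 \<le> N'" "N' - p1 < K"
  and A: "p1 < N' \<longrightarrow> q < tt (Suc p1) + m"
  and B: "q < tt p1 + m \<longrightarrow> p1 = lo"
  and p2: "p2 = (if p1 < N' \<and> tt (Suc p1) + m \<le> Suc q then Suc p1 else p1)"
  shows "r \<le> p2 \<and> lo \<le> p2 \<and> p2 \<le> N' \<and> N' - p2 < K \<and> (p2 < N' \<longrightarrow> Suc q < tt (Suc p2) + m) \<and> (Suc q < tt p2 + m \<longrightarrow> p2 = lo)"
proof (cases "p1 < N' \<and> tt (Suc p1) + m \<le> Suc q")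
  case True
  then have e: "tt (Suc p1) + m = Suc q" using A by auto
  have "Suc p1 < N' \<longrightarrow> tt (Suc p1) < tt (Suc (Suc p1))" using strict h by auto
  then show ?thesis using True e h p2 by auto
next
  case False
  then show ?thesis using A B h p2 by auto
qed




lemma inv_step:
  assumes I: "Inv K e1 m xs a" and a: "a = (q,R,N,p,r,tt,RR)"
    and bnd: "\<forall>i\<ge>1. 0 \<le> xs i \<and> xs i \<le> 1" and e1: "0 < e1" "e1 < 1" and K: "2 \<le> K"
    and x: "x = xs (Suc q)"
  shows "Inv K e1 m xs (astep K e1 m a x)"
proof -
  define Z where "Z = tt r"
  have I0: "(r \<le> p) \<and> (p \<le> N) \<and> (N - p < K) \<and> (Z \<le> q) \<and> (0 < Z \<longrightarrow> xs Z = 0) \<and> (\<forall>i. Z < i \<and> i \<le> q \<longrightarrow> 0 < xs i) \<and> (R = pr xs Z q) \<and> (\<forall>j. r \<le> j \<and> j \<le> N \<longrightarrow> RR j = pr xs Z (tt j) \<and> tt j \<le> q) \<and> (\<forall>j. r \<le> j \<and> j < N \<longrightarrow> tt j < tt (Suc j) \<and> RR (Suc j) \<le> RR j * e1) \<and> (\<forall>j t. r \<le> j \<and> j \<le> N \<and> tt j \<le> t \<and> t \<le> q \<and> (j < N \<longrightarrow> t < tt (Suc j)) \<longrightarrow> RR j * e1 < pr xs Z t) \<and> (max r (Suc N - K) \<le> p) \<and> (p < N \<longrightarrow> q < tt (Suc p) + m) \<and> (q < tt p + m \<longrightarrow> p = max r (Suc N - K))"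
    using I unfolding Inv_def a Z_def prod.case by blast
  have i1: "r \<le> p" using I0 by blast
  have i2: "p \<le> N" using I0 by blast
  have i3: "N - p < K" using I0 by blast
  have i4: "Z \<le> q" using I0 by blast
  have i5: "0 < Z \<longrightarrow> xs Z = 0" using I0 by blast
  have i6: "\<forall>i. Z < i \<and> i \<le> q \<longrightarrow> 0 < xs i" using I0 by blast
  have i7: "R = pr xs Z q" using I0 by blast
  have i8: "\<forall>j. r \<le> j \<and> j \<le> N \<longrightarrow> RR j = pr xs Z (tt j) \<and> tt j \<le> q" using I0 by blast
  have i9: "\<forall>j. r \<le> j \<and> j < N \<longrightarrow> tt j < tt (Suc j) \<and> RR (Suc j) \<le> RR j * e1" using I0 by blast
  have i10: "\<forall>j t. r \<le> j \<and> j \<le> N \<and> tt j \<le> t \<and> t \<le> q \<and> (j < N \<longrightarrow> t < tt (Suc j)) \<longrightarrow> RR j * e1 < pr xs Z t" using I0 by blast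
  have i11: "max r (Suc N - K) \<le> p" using I0 by blast
  have i12: "p < N \<longrightarrow> q < tt (Suc p) + m" using I0 by blast
  have i13: "q < tt p + m \<longrightarrow> p = max r (Suc N - K)" using I0 by blast
  note I1 = i1 i2 i3 i4 i5 i6 i7 i8 i9 i10 i11 i12 i13
  have x01: "0 \<le> x" "x \<le> 1" using bnd x by auto
  show ?thesis
  proof (cases "x \<le> 0")
    case True
    then have x0: "xs (Suc q) = 0" using x x01 by simp
    have mx: "max (Suc N) (Suc (Suc N) - K) = Suc N" using K by simp
    have st: "astep K e1 m a x = (Suc q, 1, Suc N, Suc N, Suc N, tt(Suc N := Suc q), RR(Suc N := 1))"
      using True unfolding a astep_def by simp
    have e: "\<And>j. (Suc N \<le> j \<and> j \<le> Suc N) = (j = Suc N)" "\<And>t. (Suc q \<le> t \<and> t \<le> Suc q) = (t = Suc q)" by auto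
    show ?thesis unfolding st Inv_def prod.case mx
      apply (intro conjI)
      apply (simp_all add: e x0 e1 K)
      using K apply linarith
      done
  next
    case xp: False
    then have x0: "0 < x" by simp
    have pos': "\<forall>i. Z < i \<and> i \<le> Suc q \<longrightarrow> 0 < xs i" using I1(6) x0 x le_Suc_eq by auto
    have R': "R * x = pr xs Z (Suc q)" using I1(7) pr_Suc[OF I1(4)] x by simp
    have R'pos: "0 < R * x" using R' pr_pos[OF pos'] by simp
    show ?thesis
    proof (cases "R*x \<le> RR N * e1")
      case ev: True
      define p1 where "p1 = (if K \<le> N - p + 1 then Suc p else p)"
      define tt' where "tt' = tt(Suc N := Suc q)"
      define RR' where "RR' = RR(Suc N := R*x)"
      define p2 where "p2 = (if p1 < Suc N \<and> tt' (Suc p1) + m \<le> Suc q then Suc p1 else p1)"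
      define lo where "lo = max r (Suc (Suc N) - K)"
      have st: "astep K e1 m a x = (Suc q, R*x, Suc N, p2, r, tt', RR')"
        unfolding a astep_def p2_def p1_def tt'_def RR'_def using xp ev by (simp add: Let_def)
      have ttr: "tt' r = Z" using I1(1,2) unfolding tt'_def Z_def by simp
      have strict: "\<forall>j. r \<le> j \<and> j < Suc N \<longrightarrow> tt' j < tt' (Suc j)"
        using I1(8,9) unfolding tt'_def by (auto simp: less_Suc_eq)
      have lo1: "r \<le> lo" "lo \<le> p1" "p1 \<le> Suc N" "Suc N - p1 < K"
        using I1(1,2,3,11) K unfolding lo_def p1_def by auto
      have A: "p1 < Suc N \<longrightarrow> q < tt' (Suc p1) + m"
      proof
        assume h: "p1 < Suc N"
        show "q < tt' (Suc p1) + m"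
        proof (cases "K \<le> N - p + 1")
          case True
          then have pp: "p1 = Suc p" "p < N" using h unfolding p1_def by auto
          show ?thesis
          proof (cases "Suc (Suc p) = Suc N")
            case True
            then show ?thesis using pp unfolding tt'_def by simp
          next
            case False
            then have "Suc (Suc p) \<le> N" using pp by simp
            then have "tt (Suc p) < tt (Suc (Suc p))" using I1(9) I1(1) by auto
            then show ?thesis using pp False I1(12) unfolding tt'_def by simp
          qed
        next
          case False
          then have "p1 = p" unfolding p1_def by auto
          then show ?thesis using I1(12) I1(2) unfolding tt'_def by (cases "p = N") auto
        qed
      qed
      have B: "q < tt' p1 + m \<longrightarrow> p1 = lo"
      proof
        assume h: "q < tt' p1 + m"
        show "p1 = lo"
        proof (cases "K \<le> N - p + 1")
          case True
          then show ?thesis using I1(1,2,3) unfolding p1_def lo_def by auto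
        next
          case False
          then have "p1 = p" unfolding p1_def by auto
          then have "p = max r (Suc N - K)" using h I1(2,13) unfolding tt'_def by auto
          then show ?thesis using \<open>p1 = p\<close> lo1 False unfolding lo_def by auto
        qed
      qed
      have P: "r \<le> p2 \<and> lo \<le> p2 \<and> p2 \<le> Suc N \<and> Suc N - p2 < K \<and> (p2 < Suc N \<longrightarrow> Suc q < tt' (Suc p2) + m) \<and> (Suc q < tt' p2 + m \<longrightarrow> p2 = lo)"
        by (rule ptr_step[OF strict lo1 A B p2_def])
      have c5: "\<forall>j. r \<le> j \<and> j \<le> Suc N \<longrightarrow> RR' j = pr xs Z (tt' j) \<and> tt' j \<le> Suc q"
        using I1(8) R' unfolding RR'_def tt'_def by (auto simp: le_Suc_eq)
      have c7: "\<forall>j. r \<le> j \<and> j < Suc N \<longrightarrow> tt' j < tt' (Suc j) \<and> RR' (Suc j) \<le> RR' j * e1"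
        using I1(9) strict ev unfolding RR'_def by (auto simp: less_Suc_eq)
      have c6: "\<forall>j t. r \<le> j \<and> j \<le> Suc N \<and> tt' j \<le> t \<and> t \<le> Suc q \<and> (j < Suc N \<longrightarrow> t < tt' (Suc j)) \<longrightarrow> RR' j * e1 < pr xs Z t"
      proof (intro allI impI)
        fix j t assume h: "r \<le> j \<and> j \<le> Suc N \<and> tt' j \<le> t \<and> t \<le> Suc q \<and> (j < Suc N \<longrightarrow> t < tt' (Suc j))"
        show "RR' j * e1 < pr xs Z t"
        proof (cases "j = Suc N")
          case True
          then have "t = Suc q" using h unfolding tt'_def by auto
          then show ?thesis using True R' R'pos e1 unfolding RR'_def by simp
        next
          case False
          then have j: "j \<le> N" "tt j \<le> t" using h unfolding tt'_def by auto
          have "t \<le> q"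
          proof (cases "j < N")
            case True
            then have "t < tt (Suc j)" "tt (Suc j) \<le> q" using h I1(8) unfolding tt'_def by auto
            then show ?thesis by simp
          next
            case False
            then have "j = N" using j by simp
            then show ?thesis using h unfolding tt'_def by auto
          qed
          moreover have "j < N \<longrightarrow> t < tt (Suc j)" using h unfolding tt'_def by auto
          ultimately show ?thesis using I1(10) j h False unfolding RR'_def by auto
        qed
      qed
      have I4: "Z \<le> Suc q" using I1(4) by simp
      show ?thesis unfolding st Inv_def prod.case ttr lo_def[symmetric]
        using P c5 c6 c7 pos' R' I4 I1(5) by blast
    next
      case nev: False
      define p2 where "p2 = (if p < N \<and> tt (Suc p) + m \<le> Suc q then Suc p else p)"
      define lo where "lo = max r (Suc N - K)"
      have st: "astep K e1 m a x = (Suc q, R*x, N, p2, r, tt, RR)"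
        unfolding a astep_def p2_def using xp nev by simp
      have strict: "\<forall>j. r \<le> j \<and> j < N \<longrightarrow> tt j < tt (Suc j)" using I1(9) by auto
      have lo1: "r \<le> lo" "lo \<le> p" "p \<le> N" "N - p < K" using I1(1,2,3,11) unfolding lo_def by auto
      have P: "r \<le> p2 \<and> lo \<le> p2 \<and> p2 \<le> N \<and> N - p2 < K \<and> (p2 < N \<longrightarrow> Suc q < tt (Suc p2) + m) \<and> (Suc q < tt p2 + m \<longrightarrow> p2 = lo)"
        by (rule ptr_step[OF strict lo1 _ _ p2_def]) (use I1(12,13) lo_def in auto)
      have c6: "\<forall>j t. r \<le> j \<and> j \<le> N \<and> tt j \<le> t \<and> t \<le> Suc q \<and> (j < N \<longrightarrow> t < tt (Suc j)) \<longrightarrow> RR j * e1 < pr xs Z t"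
      proof (intro allI impI)
        fix j t assume h: "r \<le> j \<and> j \<le> N \<and> tt j \<le> t \<and> t \<le> Suc q \<and> (j < N \<longrightarrow> t < tt (Suc j))"
        show "RR j * e1 < pr xs Z t"
        proof (cases "t = Suc q")
          case True
          have "\<not> j < N"
          proof
            assume "j < N"
            then have "tt (Suc j) \<le> q" using I1(8) h by auto
            then show False using h True \<open>j < N\<close> by auto
          qed
          then have "j = N" using h by auto
          then show ?thesis using True R' nev by simp
        next
          case False
          then show ?thesis using h I1(10) by auto
        qed
      qed
      have I4: "Z \<le> Suc q" using I1(4) by simp
      have c5: "\<forall>j. r \<le> j \<and> j \<le> N \<longrightarrow> RR j = pr xs Z (tt j) \<and> tt j \<le> Suc q"
        using I1(8) by (auto simp: le_Suc_eq)
      show ?thesis unfolding st Inv_def prod.case Z_def[symmetric] lo_def[symmetric]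
        using P c5 c6 I1(9) pos' R' I4 I1(5) by blast
    qed
  qed
qed

lemma mono_tt:
  fixes tt :: "nat \<Rightarrow> nat"
  assumes "\<forall>j. r \<le> j \<and> j < N \<longrightarrow> tt j < tt (Suc j)"
  shows "r \<le> j \<Longrightarrow> j \<le> N \<Longrightarrow> tt r \<le> tt j"
proof (induction j)
  case 0 then show ?case by simp
next
  case (Suc j)
  show ?case
  proof (cases "r = Suc j")
    case True then show ?thesis by simp
  next
    case False
    then have "r \<le> j" "j < N" using Suc.prems by auto
    then show ?thesis using Suc.IH assms by fastforce
  qed
qed

lemma chain_RR:
  assumes "\<forall>j. r \<le> j \<and> j < N \<longrightarrow> RR (Suc j) \<le> RR j * e1" "r \<le> p" "0 \<le> (e1::real)"
  shows "p + k \<le> N \<Longrightarrow> RR (p + k) \<le> RR p * e1 ^ k"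
proof (induction k)
  case 0 then show ?case by simp
next
  case (Suc k)
  have "RR (p + Suc k) \<le> RR (p + k) * e1" using assms Suc.prems by auto
  also have "\<dots> \<le> RR p * e1 ^ k * e1" using Suc assms(3) by (simp add: mult_right_mono)
  finally show ?case by (simp add: algebra_simps)
qed

lemma out_ok:
  assumes I: "Inv K e1 m xs a" and a: "a = (q,R,N,p,r,tt,RR)"
    and bnd: "\<forall>i\<ge>1. 0 \<le> xs i \<and> xs i \<le> 1" and e1: "0 < e1" "e1 < 1"
    and m: "1 \<le> m" "m \<le> q" and z: "0 < z" and pw: "e1 ^ (K - 1) \<le> e1 / z"
  shows "case aout m a of OutNum v \<Rightarrow> e1 * pr xs (q - m) q \<le> v \<and> v \<le> pr xs (q - m) q
           | OutNo \<Rightarrow> pr xs (q - m) q \<le> e1 / z"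
proof -
  define Z where "Z = tt r"
  define u where "u = q - m"
  define W where "W = pr xs u q"
  have I0: "(r \<le> p) \<and> (p \<le> N) \<and> (N - p < K) \<and> (Z \<le> q) \<and> (0 < Z \<longrightarrow> xs Z = 0) \<and> (\<forall>i. Z < i \<and> i \<le> q \<longrightarrow> 0 < xs i) \<and> (R = pr xs Z q) \<and> (\<forall>j. r \<le> j \<and> j \<le> N \<longrightarrow> RR j = pr xs Z (tt j) \<and> tt j \<le> q) \<and> (\<forall>j. r \<le> j \<and> j < N \<longrightarrow> tt j < tt (Suc j) \<and> RR (Suc j) \<le> RR j * e1) \<and> (\<forall>j t. r \<le> j \<and> j \<le> N \<and> tt j \<le> t \<and> t \<le> q \<and> (j < N \<longrightarrow> t < tt (Suc j)) \<longrightarrow> RR j * e1 < pr xs Z t) \<and> (max r (Suc N - K) \<le> p) \<and> (p < N \<longrightarrow> q < tt (Suc p) + m) \<and> (q < tt p + m \<longrightarrow> p = max r (Suc N - K))"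
    using I unfolding Inv_def a Z_def prod.case by blast
  have i1: "r \<le> p" "p \<le> N" "N - p < K" "Z \<le> q" "0 < Z \<longrightarrow> xs Z = 0" using I0 by blast+
  have i6: "\<forall>i. Z < i \<and> i \<le> q \<longrightarrow> 0 < xs i" using I0 by blast
  have i7: "R = pr xs Z q" using I0 by blast
  have i8: "\<forall>j. r \<le> j \<and> j \<le> N \<longrightarrow> RR j = pr xs Z (tt j) \<and> tt j \<le> q" using I0 by blast
  have i9: "\<forall>j. r \<le> j \<and> j < N \<longrightarrow> tt j < tt (Suc j)" "\<forall>j. r \<le> j \<and> j < N \<longrightarrow> RR (Suc j) \<le> RR j * e1" using I0 by blast+
  have i10: "\<forall>j t. r \<le> j \<and> j \<le> N \<and> tt j \<le> t \<and> t \<le> q \<and> (j < N \<longrightarrow> t < tt (Suc j)) \<longrightarrow> RR j * e1 < pr xs Z t" using I0 by blast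
  have i12: "p < N \<longrightarrow> q < tt (Suc p) + m" "q < tt p + m \<longrightarrow> p = max r (Suc N - K)" using I0 by blast+
  have Ztp: "Z \<le> tt p" unfolding Z_def using mono_tt[OF i9(1)] i1 by blast
  have tpq: "tt p \<le> q" using i8 i1 by blast
  have W0: "0 \<le> W" unfolding W_def using pr_nonneg[OF bnd] .
  show ?thesis
  proof (cases "tt p + m \<le> q")
    case True
    have out: "aout m a = OutNum (R / RR p)" unfolding a aout_def using True by simp
    have tu: "tt p \<le> u" "u \<le> q" using True unfolding u_def by auto
    have a1: "R = pr xs Z u * W" unfolding W_def i7 using pr_split[of Z u q xs] Ztp tu by simp
    have a2: "0 < pr xs Z u" using pr_pos[of Z u xs] i6 tu by auto
    have pu: "p < N \<longrightarrow> u < tt (Suc p)" using i12(1) m unfolding u_def by auto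
    have a3: "RR p * e1 < pr xs Z u" using i10[rule_format, of p u] i1 tu pu by blast
    have a4: "pr xs Z u \<le> RR p" using i8 i1 pr_mono[OF bnd Ztp tu(1)] by auto
    have RRp: "0 < RR p" using a2 a4 by simp
    have v: "R / RR p = W * (pr xs Z u / RR p)" using a1 by simp
    have f1: "pr xs Z u / RR p \<le> 1" using a4 RRp by simp
    have f2: "e1 \<le> pr xs Z u / RR p" using a3 RRp by (simp add: field_simps)
    have "W * e1 \<le> W * (pr xs Z u / RR p)" using f2 W0 by (rule mult_left_mono)
    then have h1: "e1 * W \<le> R / RR p" unfolding v by (simp add: mult.commute)
    have "W * (pr xs Z u / RR p) \<le> W * 1" using f1 W0 by (rule mult_left_mono)
    then have h2: "R / RR p \<le> W" unfolding v by simp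
    from h1 h2 show ?thesis unfolding out W_def u_def by simp
  next
    case False
    have out: "aout m a = OutNo" unfolding a aout_def using False by simp
    have pl: "p = max r (Suc N - K)" using i12(2) False by simp
    show ?thesis
    proof (cases "p = r")
      case True
      then have "u < Z" using False m unfolding u_def Z_def by auto
      then have "0 < Z" by simp
      then have "xs Z = 0" using i1 by simp
      then have "W = 0" unfolding W_def using pr_zero[of u Z q xs] \<open>u < Z\<close> i1 by simp
      then show ?thesis unfolding out W_def u_def using e1 z by simp
    next
      case False2: False
      then have pK: "p = Suc N - K" "r < p" using pl i1 by auto
      then have NpK: "N - p = K - 1" using i1 by auto
      have ut: "u < tt p" using False m unfolding u_def by linarith
      have b1: "W \<le> pr xs (tt p) q"
        unfolding W_def using pr_split[of u "tt p" q xs] ut tpq pr_le1[OF bnd, of u "tt p"] pr_nonneg[OF bnd, of "tt p" q] pr_nonneg[OF bnd, of u "tt p"]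
        by (simp add: mult_left_le_one_le)
      have b2: "R = RR p * pr xs (tt p) q" using i7 i8 i1 pr_split[of Z "tt p" q xs] Ztp tpq by simp
      have b3: "0 < RR p" using i8 i1 pr_pos[of Z "tt p" xs] i6 tpq by auto
      have ZN: "Z \<le> tt N" unfolding Z_def using mono_tt[OF i9(1)] i1 by auto
      have b4: "R \<le> RR N" using i7 i8 i1 pr_mono[OF bnd ZN] by auto
      have b5: "RR N \<le> RR p * e1 ^ (N - p)" using chain_RR[OF i9(2) i1(1), of "N - p"] e1 i1 by auto
      have "RR p * pr xs (tt p) q \<le> RR p * e1 ^ (K - 1)" using b2 b4 b5 NpK by simp
      then have "pr xs (tt p) q \<le> e1 ^ (K - 1)" using b3 by simp
      then show ?thesis unfolding out W_def u_def using b1 pw unfolding W_def u_def by simp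
    qed
  qed
qed

lemma pw_bound:
  assumes e1: "0 < e1" "e1 < 1" and z: "1 < z" and K: "K = nat \<lceil>log (1/e1) z\<rceil> + 2"
  shows "e1 ^ (K - 1) \<le> e1 / z" and "0 < log (1/e1) z"
proof -
  define b where "b = 1 / e1"
  define L where "L = log b z"
  define n where "n = nat \<lceil>L\<rceil>"
  have b1: "1 < b" using e1 unfolding b_def by simp
  show L0: "0 < log (1/e1) z" using b1 z unfolding b_def by simp
  have Ln: "L \<le> real n" unfolding n_def by linarith
  have "e1 ^ n = e1 powr (real n)" using e1 by (simp add: powr_realpow)
  also have "\<dots> \<le> e1 powr L" using powr_mono'[OF Ln] e1 by simp
  also have "e1 powr L = inverse (b powr L)" unfolding b_def using inverse_powr[of b L] by (simp add: b_def)
  also have "b powr L = z" unfolding L_def using b1 z by simp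
  finally have "e1 ^ n \<le> 1 / z" by (simp add: divide_inverse)
  moreover have "K - 1 = Suc n" using K unfolding n_def L_def b_def by simp
  ultimately show "e1 ^ (K - 1) \<le> e1 / z" using e1
    by (simp add: mult_left_mono divide_inverse)
qed

primrec asq :: "nat \<Rightarrow> real \<Rightarrow> nat \<Rightarrow> (nat \<Rightarrow> real) \<Rightarrow> nat \<Rightarrow> ast" where
  "asq K e1 m xs 0 = (0, 1, 0, 0, 0, \<lambda>_. 0, \<lambda>_. 1)"
| "asq K e1 m xs (Suc q) = astep K e1 m (asq K e1 m xs q) (xs (Suc q))"

lemma asq_fst: "fst (asq K e1 m xs q) = q"
proof (induction q)
  case 0 then show ?case by simp
next
  case (Suc q)
  then show ?case by (cases "asq K e1 m xs q") (auto simp: astep_def Let_def)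
qed

lemma asq_inv:
  assumes bnd: "\<forall>i\<ge>1. 0 \<le> xs i \<and> xs i \<le> 1" and e1: "0 < e1" "e1 < 1" and K: "2 \<le> K"
  shows "Inv K e1 m xs (asq K e1 m xs q)"
proof (induction q)
  case 0
  show ?case unfolding Inv_def using e1 K by simp
next
  case (Suc q)
  obtain q' R N p r tt RR where a: "asq K e1 m xs q = (q',R,N,p,r,tt,RR)" by (cases "asq K e1 m xs q") auto
  have "q' = q" using asq_fst[of K e1 m xs q] a by simp
  then show ?case using inv_step[OF Suc a bnd e1 K] a by simp
qed

definition M0 :: "nat \<Rightarrow> real \<Rightarrow> nat \<Rightarrow> real list" where
"M0 K e1 m = [0, 1, 17, 17, 0, 1, 0, e1, real m, 17 + real K, 17, real K, real K - 1, 0, 0, 0, 0]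
   @ map (\<lambda>i. 0) [0..<K] @ map (\<lambda>i. if i = 0 then 1 else 0) [0..<K]"

lemma M0_mf: "0 < K \<Longrightarrow> memfacts K e1 m (M0 K e1 m) (0, 1, 0, 0, 0, \<lambda>i. 0, \<lambda>i. if i = 0 then 1 else 0)"
  unfolding memfacts_def M0_def rd_def by (auto simp: nth_append)

lemma M0_len: "length (M0 K e1 m) = 17 + 2 * K" unfolding M0_def by simp

lemma run_all:
  assumes bnd: "\<forall>i\<ge>1. 0 \<le> xs i \<and> xs i \<le> 1" and e1: "0 < e1" "e1 < 1" and K: "2 \<le> K" and m: "1 \<le> m"
  shows "\<exists>M c. run prog 60 (M0 K e1 m) xs q = Some (M, if q = 0 then OutNo else aout m (asq K e1 m xs q))
     \<and> memfacts K e1 m M c \<and> rep K (asq K e1 m xs q) c"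
proof (induction q)
  case 0
  have "rep K (asq K e1 m xs 0) (0, 1, 0, 0, 0, \<lambda>i. 0, \<lambda>i. if i = 0 then 1 else 0)"
    unfolding rep_def by auto
  moreover have "memfacts K e1 m (M0 K e1 m) (0, 1, 0, 0, 0, \<lambda>i. 0, \<lambda>i. if i = 0 then 1 else 0)"
    using M0_mf K by simp
  ultimately show ?case by (intro exI[of _ "M0 K e1 m"] exI[of _ "(0, 1, 0, 0, 0, \<lambda>i. 0, \<lambda>i. if i = 0 then 1 else 0)"]) simp
next
  case (Suc q)
  then obtain M c where h: "run prog 60 (M0 K e1 m) xs q = Some (M, if q = 0 then OutNo else aout m (asq K e1 m xs q))"
    "memfacts K e1 m M c" "rep K (asq K e1 m xs q) c" by blast
  obtain M' where e: "exec prog (xs (Suc q)) 60 0 M = Some (M', outf m (cstep K e1 m c (xs (Suc q))))"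
    "memfacts K e1 m M' (cstep K e1 m c (xs (Suc q)))" using blk_main[OF h(2) m] by blast
  obtain q' R N p r tt RR where a: "asq K e1 m xs q = (q',R,N,p,r,tt,RR)" by (cases "asq K e1 m xs q") auto
  have I: "Inv K e1 m xs (asq K e1 m xs q)" using asq_inv[OF bnd e1 K] .
  then have S: "p \<le> N" "N - p < K" using a unfolding Inv_def by auto
  have r': "rep K (asq K e1 m xs (Suc q)) (cstep K e1 m c (xs (Suc q)))"
    using rep_step[OF h(3) a S K] by simp
  obtain q2 R2 N2 p2 r2 tt2 RR2 where a2: "asq K e1 m xs (Suc q) = (q2,R2,N2,p2,r2,tt2,RR2)"
    by (cases "asq K e1 m xs (Suc q)") auto
  have I2: "Inv K e1 m xs (asq K e1 m xs (Suc q))" using asq_inv[OF bnd e1 K] .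
  then have S2: "p2 \<le> N2" "N2 - p2 < K" using a2 unfolding Inv_def by auto
  have o: "outf m (cstep K e1 m c (xs (Suc q))) = aout m (asq K e1 m xs (Suc q))"
    using out_eq[OF r' a2 S2] .
  have "run prog 60 (M0 K e1 m) xs (Suc q) = Some (M', aout m (asq K e1 m xs (Suc q)))"
    using h(1) e o by simp
  then show ?case using e(2) r'
    by (intro exI[of _ M'] exI[of _ "cstep K e1 m c (xs (Suc q))"]) simp
qed

theorem lemma1:
  shows "\<exists>C::real. \<forall>(\<epsilon>::real) (z::real) (m::nat).
    0 < \<epsilon> \<longrightarrow> \<epsilon> < 1 \<longrightarrow> z > 1 \<longrightarrow> m \<ge> 1 \<longrightarrow>
    (\<exists>(P::instr list) (M0::real list) (T::nat).
       real (length M0) \<le> C * max 1 (log (1 / (1 - \<epsilon>)) z) \<and>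
       real T \<le> C \<and>
       (\<forall>xs::nat \<Rightarrow> real. (\<forall>i\<ge>1. 0 \<le> xs i \<and> xs i \<le> 1) \<longrightarrow>
          (\<forall>q. run P T M0 xs q \<noteq> None) \<and>
          (\<forall>q\<ge>m. let W = (\<Prod>i\<in>{q - m + 1..q}. xs i) in
             (case snd (the (run P T M0 xs q)) of
                OutNum v \<Rightarrow> (1 - \<epsilon>) * W \<le> v \<and> v \<le> W
              | OutNo \<Rightarrow> W \<le> (1 - \<epsilon>) / z))))"
proof (intro exI[of _ 100] allI impI)
  fix \<epsilon> z :: real and m :: nat
  assume h: "0 < \<epsilon>" "\<epsilon> < 1" "z > 1" "m \<ge> 1"
  define e1 where "e1 = 1 - \<epsilon>"
  define L where "L = log (1 / e1) z"
  define K where "K = nat \<lceil>L\<rceil> + 2"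
  have e1: "0 < e1" "e1 < 1" using h unfolding e1_def by auto
  have pw: "e1 ^ (K - 1) \<le> e1 / z" and L0: "0 < L"
    using pw_bound[OF e1 h(3), of K] unfolding K_def L_def by auto
  have K2: "2 \<le> K" unfolding K_def by simp
  have KL: "real K \<le> L + 3" unfolding K_def using L0 by linarith
  show "\<exists>(P::instr list) (M0::real list) (T::nat).
       real (length M0) \<le> 100 * max 1 (log (1 / (1 - \<epsilon>)) z) \<and>
       real T \<le> 100 \<and>
       (\<forall>xs::nat \<Rightarrow> real. (\<forall>i\<ge>1. 0 \<le> xs i \<and> xs i \<le> 1) \<longrightarrow>
          (\<forall>q. run P T M0 xs q \<noteq> None) \<and>
          (\<forall>q\<ge>m. let W = (\<Prod>i\<in>{q - m + 1..q}. xs i) in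
             (case snd (the (run P T M0 xs q)) of
                OutNum v \<Rightarrow> (1 - \<epsilon>) * W \<le> v \<and> v \<le> W
              | OutNo \<Rightarrow> W \<le> (1 - \<epsilon>) / z)))"
  proof (intro exI[of _ prog] exI[of _ "M0 K e1 m"] exI[of _ 60] conjI allI impI)
    have "real (length (M0 K e1 m)) = 17 + 2 * real K" unfolding M0_len by simp
    also have "\<dots> \<le> 100 * max 1 L" using KL L0 by (simp add: max_def)
    finally show "real (length (M0 K e1 m)) \<le> 100 * max 1 (log (1 / (1 - \<epsilon>)) z)"
      unfolding L_def e1_def .
    show "real (60::nat) \<le> 100" by simp
  next
    fix xs :: "nat \<Rightarrow> real" and q :: nat
    assume bnd: "\<forall>i\<ge>1. 0 \<le> xs i \<and> xs i \<le> 1"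
    show "run prog 60 (M0 K e1 m) xs q \<noteq> None" using run_all[OF bnd e1 K2 h(4), of q] by auto
  next
    fix xs :: "nat \<Rightarrow> real" and q :: nat
    assume bnd: "\<forall>i\<ge>1. 0 \<le> xs i \<and> xs i \<le> 1" and qm: "m \<le> q"
    obtain M c where rn: "run prog 60 (M0 K e1 m) xs q = Some (M, if q = 0 then OutNo else aout m (asq K e1 m xs q))"
      using run_all[OF bnd e1 K2 h(4), of q] by blast
    have q0: "q \<noteq> 0" using qm h(4) by simp
    obtain q' R N p r tt RR where a: "asq K e1 m xs q = (q',R,N,p,r,tt,RR)" by (cases "asq K e1 m xs q") auto
    have qq: "q' = q" using asq_fst[of K e1 m xs q] a by simp
    have I: "Inv K e1 m xs (q,R,N,p,r,tt,RR)" using asq_inv[OF bnd e1 K2, of m q] a qq by simp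
    have W: "(\<Prod>i\<in>{q - m + 1..q}. xs i) = pr xs (q - m) q"
      unfolding pr_def using atLeastSucAtMost_greaterThanAtMost[of "q - m" q] by simp
    have o: "snd (the (run prog 60 (M0 K e1 m) xs q)) = aout m (q,R,N,p,r,tt,RR)"
      using rn q0 a qq by simp
    show "let W = (\<Prod>i\<in>{q - m + 1..q}. xs i) in
             (case snd (the (run prog 60 (M0 K e1 m) xs q)) of
                OutNum v \<Rightarrow> (1 - \<epsilon>) * W \<le> v \<and> v \<le> W
              | OutNo \<Rightarrow> W \<le> (1 - \<epsilon>) / z)"
      unfolding Let_def W o e1_def[symmetric]
      using out_ok[OF I refl bnd e1 h(4) qm _ pw] h(3) by simp
  qed
qed


end
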